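(* Under the assumptions below, let $y_\varrho\in Y$ be the solution of the continuous problem and $y_{\varrho h}\in Y_h$ the unique solution of the Galerkin problem, with the choice $\varrho=h^{2\alpha}$. Then there is a constant $c>0$ independent of $h$ and $\overline{y}$ such that $$\|y_\varrho-y_{\varrho h}\|_{H_Y}^2+h^{2\alpha}\|y_\varrho-y_{\varrho h}\|_D^2\le c\begin{cases}\|\overline{y}\|_{H_Y}^2&\text{for }\overline{y}\in H_Y,\\ h^{2\alpha}\|\overline{y}\|_D^2&\text{for }\overline{y}\in Y,\\ h^{4\alpha}\|D\overline{y}\|_{H_Y}^2&\text{for }\overline{y}\in Y,\ D\overline{y}\in H_Y.\end{cases}$$
   Context: Abstract setting: Let $Y\subset H_Y\subset Y^*$ be a Gelfand triple of real Hilbert spaces, with duality pairing $\langle\cdot,\cdot\rangle_{Y^*,Y}$ extending the inner product of $H_Y$. Let $D:Y\to Y^*$ be bounded, linear, self-adjoint and elliptic, $\|y\|_D:=\langle Dy,y\rangle_{Y^*,Y}^{1/2}$ (an equivalent norm on $Y$). For $y\in Y$ we write "$Dy\in H_Y$" if there is $w\in H_Y$ with $\langle Dy,v\rangle_{Y^*,Y}=\langle w,v\rangle_{H_Y}$ for all $v\in Y$, and then $\|Dy\|_{H_Y}:=\|w\|_{H_Y}$. Given $\overline{y}\in H_Y$ and $\varrho>0$, $y_\varrho\in Y$ is the unique solution of $\langle y_\varrho,y\rangle_{H_Y}+\varrho\langle Dy_\varrho,y\rangle_{Y^*,Y}=\langle\overline{y},y\rangle_{H_Y}$ for all $y\in Y$.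 Discretization: For each discretization parameter $h\in(0,h_0]$ let $Y_h\subset Y$ be a finite-dimensional subspace, and assume there are maps $P_h:Y\to Y_h$, an exponent $\alpha>0$ and constants $c_1,c_2,c_3,c_4>0$ independent of $h$ such that for all $y\in Y$: $\|y-P_hy\|_{H_Y}\le c_1h^\alpha\|y\|_D$ and $\|y-P_hy\|_D\le c_2\|y\|_D$; and, if in addition $Dy\in H_Y$: $\|y-P_hy\|_{H_Y}\le c_3h^{2\alpha}\|Dy\|_{H_Y}$ and $\|y-P_hy\|_D\le c_4h^\alpha\|Dy\|_{H_Y}$. The Galerkin solution $y_{\varrho h}\in Y_h$ satisfies $\langle y_{\varrho h},y_h\rangle_{H_Y}+\varrho\langle Dy_{\varrho h},y_h\rangle_{Y^*,Y}=\langle\overline{y},y_h\rangle_{H_Y}$ for all $y_h\in Y_h$. *)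

theory Defs
  imports "HOL-Analysis.Analysis"
begin

text \<open>The operator D : Y -> Y* is represented by its bilinear form d y v = <D y, v>.
  The energy norm ||y||_D = <D y, y>^(1/2).\<close>
definition Dnorm :: "('y \<Rightarrow> 'y \<Rightarrow> real) \<Rightarrow> 'y \<Rightarrow> real" where
  "Dnorm d y = sqrt (d y y)"

text \<open>"D y \<in> H_Y" with representative w: <D y, v> = (w, \<iota> v)_H for all v in Y.\<close>
definition D_repr :: "('y \<Rightarrow> 'h::real_inner) \<Rightarrow> ('y \<Rightarrow> 'y \<Rightarrow> real) \<Rightarrow> 'y \<Rightarrow> 'h \<Rightarrow> bool" where
  "D_repr \<iota> d y w \<longleftrightarrow> (\<forall>v. d y v = inner w (\<iota> v))"

end

theory Submission
  imports Defs
begin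
lemma cea:
  fixes \<iota> :: "'y::real_vector \<Rightarrow> 'h::real_inner"
  assumes lin: "linear \<iota>" and bl: "bilinear d" and sym: "\<And>u v. d u v = d v u"
    and pos: "\<And>u. d u u \<ge> 0" and rho: "\<rho> > 0"
    and orth: "inner (\<iota> e) (\<iota> u) + \<rho> * d e u = 0"
  shows "(norm (\<iota> e))\<^sup>2 + \<rho> * d e e \<le> (norm (\<iota> (e+u)))\<^sup>2 + \<rho> * d (e+u) (e+u)"
proof -
  have i: "\<iota> (e+u) = \<iota> e + \<iota> u" using lin by (simp add: linear_add)
  have n: "(norm (\<iota> (e+u)))\<^sup>2 = (norm (\<iota> e))\<^sup>2 + 2 * inner (\<iota> e) (\<iota> u) + (norm (\<iota> u))\<^sup>2"
    unfolding i power2_norm_eq_inner by (simp add: inner_add inner_commute)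
  have dd: "d (e+u) (e+u) = d e e + 2 * d e u + d u u"
    using bl sym[of u e] by (simp add: bilinear_ladd bilinear_radd)
  have "0 \<le> \<rho> * d u u" using rho pos[of u] by simp
  then show ?thesis unfolding n dd using orth
    by (simp add: algebra_simps)
qed
theorem mainTheorem3:
  fixes \<iota> :: "'y::{real_inner,complete_space} \<Rightarrow> 'h::{real_inner,complete_space}"
    and d :: "'y \<Rightarrow> 'y \<Rightarrow> real"
    and Yh :: "real \<Rightarrow> 'y set"
    and P :: "real \<Rightarrow> 'y \<Rightarrow> 'y"
    and h0 \<alpha> c1 c2 c3 c4 :: real
  assumes emb_lin: "bounded_linear \<iota>"
    and emb_inj: "inj \<iota>"
    and emb_dense: "closure (range \<iota>) = UNIV"
    and d_bilinear: "bilinear d"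
    and d_sym: "\<And>u v. d u v = d v u"
    and d_bounded: "\<exists>M. \<forall>u v. \<bar>d u v\<bar> \<le> M * norm u * norm v"
    and d_elliptic: "\<exists>m>0. \<forall>u. d u u \<ge> m * (norm u)\<^sup>2"
    and h0_pos: "h0 > 0"
    and alpha_pos: "\<alpha> > 0"
    and c_pos: "c1 > 0" "c2 > 0" "c3 > 0" "c4 > 0"
    and Yh_subspace: "\<And>h. 0 < h \<Longrightarrow> h \<le> h0 \<Longrightarrow> subspace (Yh h)"
    and Yh_findim: "\<And>h. 0 < h \<Longrightarrow> h \<le> h0 \<Longrightarrow> \<exists>B. finite B \<and> Yh h = span B"
    and P_into: "\<And>h y. 0 < h \<Longrightarrow> h \<le> h0 \<Longrightarrow> P h y \<in> Yh h"
    and P_est1: "\<And>h y. 0 < h \<Longrightarrow> h \<le> h0 \<Longrightarrow>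
        norm (\<iota> (y - P h y)) \<le> c1 * h powr \<alpha> * Dnorm d y"
    and P_est2: "\<And>h y. 0 < h \<Longrightarrow> h \<le> h0 \<Longrightarrow>
        Dnorm d (y - P h y) \<le> c2 * Dnorm d y"
    and P_est3: "\<And>h y w. 0 < h \<Longrightarrow> h \<le> h0 \<Longrightarrow> D_repr \<iota> d y w \<Longrightarrow>
        norm (\<iota> (y - P h y)) \<le> c3 * h powr (2 * \<alpha>) * norm w"
    and P_est4: "\<And>h y w. 0 < h \<Longrightarrow> h \<le> h0 \<Longrightarrow> D_repr \<iota> d y w \<Longrightarrow>
        Dnorm d (y - P h y) \<le> c4 * h powr \<alpha> * norm w"
  shows "\<exists>c>0. \<forall>h ybar y\<rho> y\<rho>h.
      0 < h \<and> h \<le> h0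
      \<and> (\<forall>v. inner (\<iota> y\<rho>) (\<iota> v) + h powr (2 * \<alpha>) * d y\<rho> v = inner ybar (\<iota> v))
      \<and> y\<rho>h \<in> Yh h
      \<and> (\<forall>v\<in>Yh h. inner (\<iota> y\<rho>h) (\<iota> v) + h powr (2 * \<alpha>) * d y\<rho>h v = inner ybar (\<iota> v))
      \<longrightarrow>
        (norm (\<iota> (y\<rho> - y\<rho>h)))\<^sup>2 + h powr (2 * \<alpha>) * (Dnorm d (y\<rho> - y\<rho>h))\<^sup>2
          \<le> c * (norm ybar)\<^sup>2
      \<and> (\<forall>yb. ybar = \<iota> yb \<longrightarrow>
          (norm (\<iota> (y\<rho> - y\<rho>h)))\<^sup>2 + h powr (2 * \<alpha>) * (Dnorm d (y\<rho> - y\<rho>h))\<^sup>2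
            \<le> c * h powr (2 * \<alpha>) * (Dnorm d yb)\<^sup>2)
      \<and> (\<forall>yb w. ybar = \<iota> yb \<and> D_repr \<iota> d yb w \<longrightarrow>
          (norm (\<iota> (y\<rho> - y\<rho>h)))\<^sup>2 + h powr (2 * \<alpha>) * (Dnorm d (y\<rho> - y\<rho>h))\<^sup>2
            \<le> c * h powr (4 * \<alpha>) * (norm w)\<^sup>2)"
proof -
  obtain m where m: "m > 0" "\<And>u. d u u \<ge> m * (norm u)\<^sup>2" using d_elliptic by blast
  have pos: "\<And>u. d u u \<ge> 0" using m by (meson order.trans mult_nonneg_nonneg zero_le_power2 less_imp_le)
  have DD: "\<And>u. (Dnorm d u)\<^sup>2 = d u u" using pos by (simp add: Dnorm_def)
  have lin: "linear \<iota>" using emb_lin bounded_linear.linear by blast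
  define c where "c = 1 + c1\<^sup>2 + c2\<^sup>2 + c3\<^sup>2 + c4\<^sup>2"
  have c1: "c \<ge> 1" "c \<ge> c1\<^sup>2 + c2\<^sup>2" "c \<ge> c3\<^sup>2 + c4\<^sup>2" unfolding c_def by auto
  show ?thesis
  proof (intro exI[of _ c] conjI allI impI)
    show "c > 0" using c1 by simp
    fix h ybar y\<rho> y\<rho>h
    assume A: "0 < h \<and> h \<le> h0
      \<and> (\<forall>v. inner (\<iota> y\<rho>) (\<iota> v) + h powr (2 * \<alpha>) * d y\<rho> v = inner ybar (\<iota> v))
      \<and> y\<rho>h \<in> Yh h
      \<and> (\<forall>v\<in>Yh h. inner (\<iota> y\<rho>h) (\<iota> v) + h powr (2 * \<alpha>) * d y\<rho>h v = inner ybar (\<iota> v))"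
    define \<rho> where "\<rho> = h powr (2 * \<alpha>)"
    have h: "0 < h" "h \<le> h0" using A by auto
    have rho: "\<rho> > 0" using h by (simp add: \<rho>_def)
    have rho2: "\<rho> = h powr \<alpha> * h powr \<alpha>" unfolding \<rho>_def by (simp add: powr_add[symmetric])
    have rho4: "h powr (4 * \<alpha>) = \<rho> * \<rho>" unfolding \<rho>_def by (simp add: powr_add[symmetric])
    have hpa: "h powr \<alpha> \<ge> 0" by simp
    have eq: "\<And>v. inner (\<iota> y\<rho>) (\<iota> v) + \<rho> * d y\<rho> v = inner ybar (\<iota> v)" using A \<rho>_def by auto
    have eqh: "\<And>v. v \<in> Yh h \<Longrightarrow> inner (\<iota> y\<rho>h) (\<iota> v) + \<rho> * d y\<rho>h v = inner ybar (\<iota> v)"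
      using A \<rho>_def by auto
    have S: "subspace (Yh h)" using Yh_subspace h by auto
    have yh: "y\<rho>h \<in> Yh h" using A by auto
    define e where "e = y\<rho> - y\<rho>h"
    define Q where "Q u = (norm (\<iota> u))\<^sup>2 + \<rho> * d u u" for u
    have LHS: "(norm (\<iota> (y\<rho> - y\<rho>h)))\<^sup>2 + h powr (2 * \<alpha>) * (Dnorm d (y\<rho> - y\<rho>h))\<^sup>2 = Q e"
      unfolding Q_def e_def DD \<rho>_def ..
    have orth: "inner (\<iota> e) (\<iota> u) + \<rho> * d e u = 0" if "u \<in> Yh h" for u
    proof -
      have "inner (\<iota> e) (\<iota> u) + \<rho> * d e u
          = (inner (\<iota> y\<rho>) (\<iota> u) + \<rho> * d y\<rho> u) - (inner (\<iota> y\<rho>h) (\<iota> u) + \<rho> * d y\<rho>h u)"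
        unfolding e_def using lin d_bilinear
        by (simp add: linear_diff inner_diff_left bilinear_lsub algebra_simps)
      then show ?thesis using eq[of u] eqh[OF that] by simp
    qed
    have best: "Q e \<le> Q (y\<rho> - z)" if z: "z \<in> Yh h" for z
    proof -
      have u: "y\<rho>h - z \<in> Yh h" using S yh z by (rule subspace_diff)
      have ez: "e + (y\<rho>h - z) = y\<rho> - z" unfolding e_def by simp
      show ?thesis unfolding Q_def
        using cea[OF lin d_bilinear d_sym pos rho orth[OF u]] unfolding ez .
    qed
    have Qnn: "\<And>u. Q u \<ge> (norm (\<iota> u))\<^sup>2" unfolding Q_def using rho pos
      by (simp add: mult_nonneg_nonneg)
    have Pz: "P h y\<rho> \<in> Yh h" using P_into h by auto
    have "Q e \<le> Q y\<rho>" using best[of 0] subspace_0[OF S] by simp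
    moreover have Qy: "Q y\<rho> = inner ybar (\<iota> y\<rho>)" unfolding Q_def using eq[of y\<rho>]
      by (simp add: power2_norm_eq_inner)
    moreover have "Q y\<rho> \<le> (norm ybar)\<^sup>2"
    proof -
      have a: "Q y\<rho> \<le> norm ybar * norm (\<iota> y\<rho>)" using Qy Cauchy_Schwarz_ineq2 by (metis norm_cauchy_schwarz)
      have "(norm (\<iota> y\<rho>))\<^sup>2 \<le> norm ybar * norm (\<iota> y\<rho>)" using a Qnn[of y\<rho>] by linarith
      then have "norm (\<iota> y\<rho>) \<le> norm ybar"
        by (metis mult_right_le_imp_le norm_ge_zero power2_eq_square order_le_less)
      then have "norm ybar * norm (\<iota> y\<rho>) \<le> (norm ybar)\<^sup>2"
        by (simp add: power2_eq_square mult_left_mono)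
      then show ?thesis using a by linarith
    qed
    moreover have "(norm ybar)\<^sup>2 \<le> c * (norm ybar)\<^sup>2" using c1 by (simp add: mult_le_cancel_right1)
    ultimately show "(norm (\<iota> (y\<rho> - y\<rho>h)))\<^sup>2 + h powr (2 * \<alpha>) * (Dnorm d (y\<rho> - y\<rho>h))\<^sup>2
          \<le> c * (norm ybar)\<^sup>2" unfolding LHS by linarith
    have QP: "Q e \<le> (norm (\<iota> (y\<rho> - P h y\<rho>)))\<^sup>2 + \<rho> * (Dnorm d (y\<rho> - P h y\<rho>))\<^sup>2"
      using best[OF Pz] unfolding Q_def DD .
    show "\<And>yb. ybar = \<iota> yb \<Longrightarrow>
          (norm (\<iota> (y\<rho> - y\<rho>h)))\<^sup>2 + h powr (2 * \<alpha>) * (Dnorm d (y\<rho> - y\<rho>h))\<^sup>2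
            \<le> c * h powr (2 * \<alpha>) * (Dnorm d yb)\<^sup>2"
    proof -
      fix yb assume yb: "ybar = \<iota> yb"
      have k: "(norm (\<iota> (y\<rho> - yb)))\<^sup>2 + \<rho> * d y\<rho> (y\<rho> - yb) = 0"
      proof -
        have "inner (\<iota> y\<rho>) (\<iota> (y\<rho> - yb)) - inner (\<iota> yb) (\<iota> (y\<rho> - yb)) + \<rho> * d y\<rho> (y\<rho> - yb) = 0"
          using eq[of "y\<rho> - yb"] yb by simp
        then show ?thesis using lin
          by (simp add: power2_norm_eq_inner linear_diff inner_diff_left[symmetric])
      qed
      have "\<rho> * d y\<rho> (y\<rho> - yb) \<le> 0" using k by (smt (verit) zero_le_power2)
      then have k2: "d y\<rho> (y\<rho> - yb) \<le> 0" using rho by (simp add: mult_le_0_iff)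
      have k3: "d y\<rho> (y\<rho> - yb) = d y\<rho> y\<rho> - d y\<rho> yb" using d_bilinear by (simp add: bilinear_rsub)
      have k4: "d (y\<rho> - yb) (y\<rho> - yb) = d y\<rho> y\<rho> - 2 * d y\<rho> yb + d yb yb"
        using d_bilinear d_sym[of yb y\<rho>] by (simp add: bilinear_rsub bilinear_lsub)
      have dyy: "d y\<rho> y\<rho> \<le> d yb yb" using k2 k3 k4 pos[of "y\<rho> - yb"] by linarith
      have "Q e \<le> (c1 * h powr \<alpha> * Dnorm d y\<rho>)\<^sup>2 + \<rho> * (c2 * Dnorm d y\<rho>)\<^sup>2"
      proof -
        have "(norm (\<iota> (y\<rho> - P h y\<rho>)))\<^sup>2 \<le> (c1 * h powr \<alpha> * Dnorm d y\<rho>)\<^sup>2"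
          using P_est1[OF h, of y\<rho>] by (simp add: power_mono)
        moreover have "(Dnorm d (y\<rho> - P h y\<rho>))\<^sup>2 \<le> (c2 * Dnorm d y\<rho>)\<^sup>2"
          using P_est2[OF h, of y\<rho>] by (intro power_mono) (auto simp: Dnorm_def pos)
        ultimately show ?thesis using QP rho
          by (smt (verit) mult_left_mono)
      qed
      also have "\<dots> = (c1\<^sup>2 + c2\<^sup>2) * \<rho> * d y\<rho> y\<rho>"
        unfolding rho2 DD[symmetric] by (simp add: power_mult_distrib algebra_simps power2_eq_square)
      also have "\<dots> \<le> c * \<rho> * d yb yb"
        using c1 rho dyy pos[of y\<rho>] pos[of yb]
        by (intro mult_mono) (auto intro: mult_nonneg_nonneg)
      finally show "(norm (\<iota> (y\<rho> - y\<rho>h)))\<^sup>2 + h powr (2 * \<alpha>) * (Dnorm d (y\<rho> - y\<rho>h))\<^sup>2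
            \<le> c * h powr (2 * \<alpha>) * (Dnorm d yb)\<^sup>2" using LHS DD[of yb] unfolding \<rho>_def by simp
    qed
    show "\<And>yb w. ybar = \<iota> yb \<and> D_repr \<iota> d yb w \<Longrightarrow>
          (norm (\<iota> (y\<rho> - y\<rho>h)))\<^sup>2 + h powr (2 * \<alpha>) * (Dnorm d (y\<rho> - y\<rho>h))\<^sup>2
            \<le> c * h powr (4 * \<alpha>) * (norm w)\<^sup>2"
    proof -
      fix yb w assume B: "ybar = \<iota> yb \<and> D_repr \<iota> d yb w"
      have yb: "ybar = \<iota> yb" and dw: "\<And>v. d yb v = inner w (\<iota> v)" using B by (auto simp: D_repr_def)
      define r where "r = \<iota> (y\<rho> - yb)"
      have k: "(norm r)\<^sup>2 + \<rho> * d y\<rho> (y\<rho> - yb) = 0"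
      proof -
        have "inner (\<iota> y\<rho>) (\<iota> (y\<rho> - yb)) - inner (\<iota> yb) (\<iota> (y\<rho> - yb)) + \<rho> * d y\<rho> (y\<rho> - yb) = 0"
          using eq[of "y\<rho> - yb"] yb by simp
        then show ?thesis using lin unfolding r_def
          by (simp add: power2_norm_eq_inner linear_diff inner_diff_left[symmetric])
      qed
      have k3: "d y\<rho> (y\<rho> - yb) = d (y\<rho> - yb) (y\<rho> - yb) + inner w r"
        using d_bilinear dw[of "y\<rho> - yb"] unfolding r_def by (simp add: bilinear_lsub)
      have "inner w r \<ge> - (norm w * norm r)"
        using norm_cauchy_schwarz[of "-w" r] by simp
      then have ci: "- inner w r \<le> norm w * norm r" by linarith
      have e1: "(norm r)\<^sup>2 = - (\<rho> * d (y\<rho> - yb) (y\<rho> - yb)) + \<rho> * (- inner w r)"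
        using k k3 by (simp add: algebra_simps)
      have e2: "\<rho> * d (y\<rho> - yb) (y\<rho> - yb) \<ge> 0" using rho pos[of "y\<rho> - yb"] by simp
      have e3: "\<rho> * (- inner w r) \<le> \<rho> * (norm w * norm r)"
        using mult_left_mono[OF ci] rho by simp
      have sq: "norm r * norm r \<le> (\<rho> * norm w) * norm r"
        using e1 e2 e3 by (simp add: power2_eq_square algebra_simps)
      have rb: "norm r \<le> \<rho> * norm w"
      proof (cases "norm r = 0")
        case True then show ?thesis using rho by simp
      next
        case False then have "norm r > 0" by simp
        then show ?thesis using sq by (simp add: mult_le_cancel_right_pos)
      qed
      define w' where "w' = (- r) /\<^sub>R \<rho>"
      have Dr: "D_repr \<iota> d y\<rho> w'"
        unfolding D_repr_def
      proof
        fix v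
        have "\<rho> * d y\<rho> v = - inner r (\<iota> v)" using eq[of v] yb lin unfolding r_def
          by (simp add: linear_diff inner_diff_left algebra_simps)
        then show "d y\<rho> v = inner w' (\<iota> v)" using rho unfolding w'_def
          by (simp add: field_simps)
      qed
      have nw: "norm w' \<le> norm w" using rb rho unfolding w'_def
        by (simp add: field_simps)
      have "Q e \<le> (c3 * \<rho> * norm w')\<^sup>2 + \<rho> * (c4 * h powr \<alpha> * norm w')\<^sup>2"
      proof -
        have "(norm (\<iota> (y\<rho> - P h y\<rho>)))\<^sup>2 \<le> (c3 * \<rho> * norm w')\<^sup>2"
          using P_est3[OF h Dr] unfolding \<rho>_def by (simp add: power_mono)
        moreover have "(Dnorm d (y\<rho> - P h y\<rho>))\<^sup>2 \<le> (c4 * h powr \<alpha> * norm w')\<^sup>2"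
          using P_est4[OF h Dr] by (intro power_mono) (auto simp: Dnorm_def pos)
        ultimately show ?thesis using QP rho
          by (smt (verit) mult_left_mono)
      qed
      also have "\<dots> = (c3\<^sup>2 + c4\<^sup>2) * (\<rho> * \<rho>) * (norm w')\<^sup>2"
        unfolding rho2 by (simp add: power_mult_distrib algebra_simps power2_eq_square)
      also have "\<dots> \<le> c * (\<rho> * \<rho>) * (norm w)\<^sup>2"
        using c1 rho nw
        by (intro mult_mono power_mono) auto
      finally show "(norm (\<iota> (y\<rho> - y\<rho>h)))\<^sup>2 + h powr (2 * \<alpha>) * (Dnorm d (y\<rho> - y\<rho>h))\<^sup>2
            \<le> c * h powr (4 * \<alpha>) * (norm w)\<^sup>2" using LHS rho4 by simp
    qed
  qed
qed

end
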